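(* Let $p\ge1$, $\sigma^2>0$, $\boldsymbol\beta\in\mathbb{R}^p$ not identically zero with $\beta_1\le\cdots\le\beta_p$, $\delta_1^2,\dots,\delta_p^2>0$, $\sum_{i=1}^p\beta_i/\delta_i^2\ge0$, and $\Sigma=\sigma^2\boldsymbol\beta\boldsymbol\beta^\top+\mathrm{diag}(\delta_1^2,\dots,\delta_p^2)$. Let $w=w^L$ be the long-only minimum variance portfolio (the minimizer of $w^\top\Sigma w$ subject to $w^\top\mathbf{1}_p=1$, $w\ge0$), $K=\{i:w_i>0\}$, $k=|K|$, $P=\{1,\dots,p\}$, and let $w^{LS}=\Sigma^{-1}\mathbf{1}_p/(\mathbf{1}_p^\top\Sigma^{-1}\mathbf{1}_p)$ be the long-short minimum variance portfolio. Then either $K=P$ and $w^{LS}=w^L$, or else $K\ne P$, $\sum_{j=1}^k\beta_j/\delta_j^2>0$, and for every $i$, $$w_i>0\iff \beta_i<\frac{\frac{1}{\sigma^2}+\sum_{j=1}^k\frac{\beta_j^2}{\delta_j^2}}{\sum_{j=1}^k\frac{\beta_j}{\delta_j^2}}.$$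
   Context: $\mathbf{1}_p$ is the all-ones vector in $\mathbb{R}^p$. *)

theory Defs
  imports "Jordan_Normal_Form.Gauss_Jordan_Elimination"
begin

text \<open>Indices are 0-based: the paper's index i corresponds to i-1 here.
  d is the vector of idiosyncratic variances (d i = delta_(i+1)^2).\<close>

definition ones_vec :: "nat \<Rightarrow> real vec" where
  "ones_vec p = vec p (\<lambda>_. 1)"

definition factor_cov :: "nat \<Rightarrow> real \<Rightarrow> real vec \<Rightarrow> real vec \<Rightarrow> real mat" where
  "factor_cov p s2 \<beta> d = mat p p (\<lambda>(i,j). s2 * (\<beta> $ i) * (\<beta> $ j) + (if i = j then d $ i else 0))"

definition port_var :: "real mat \<Rightarrow> real vec \<Rightarrow> real" where
  "port_var S w = w \<bullet> (S *\<^sub>v w)"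

definition long_only_feasible :: "nat \<Rightarrow> real vec \<Rightarrow> bool" where
  "long_only_feasible p w \<longleftrightarrow> w \<in> carrier_vec p \<and> w \<bullet> ones_vec p = 1 \<and> (\<forall>i<p. w $ i \<ge> 0)"

text \<open>w is the long-only minimum variance portfolio (the minimizer is unique since S is
  positive definite).\<close>
definition is_long_only_mvp :: "nat \<Rightarrow> real mat \<Rightarrow> real vec \<Rightarrow> bool" where
  "is_long_only_mvp p S w \<longleftrightarrow> long_only_feasible p w \<and>
     (\<forall>v. long_only_feasible p v \<longrightarrow> port_var S w \<le> port_var S v)"

definition long_short_mvp :: "nat \<Rightarrow> real mat \<Rightarrow> real vec" where
  "long_short_mvp p S = (let Si = the (mat_inverse S) in
      (1 / (ones_vec p \<bullet> (Si *\<^sub>v ones_vec p))) \<cdot>\<^sub>v (Si *\<^sub>v ones_vec p))"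

end

theory Submission imports Defs "Jordan_Normal_Form.Determinant" begin
lemma fc_mv:
  assumes "v \<in> carrier_vec p" "i < p"
  shows "(factor_cov p s2 \<beta> d *\<^sub>v v) $ i = s2 * \<beta> $ i * (\<Sum>l<p. \<beta> $ l * v $ l) + d $ i * v $ i"
proof -
  have "(factor_cov p s2 \<beta> d *\<^sub>v v) $ i = (\<Sum>l<p. (s2 * \<beta> $ i * \<beta> $ l + (if i = l then d $ i else 0)) * v $ l)"
    using assms by (simp add: factor_cov_def scalar_prod_def atLeast0LessThan)
  also have "\<dots> = (\<Sum>l<p. s2 * \<beta> $ i * (\<beta> $ l * v $ l)) + (\<Sum>l<p. (if i = l then d $ i * v $ l else 0))"
    by (subst sum.distrib[symmetric]) (rule sum.cong, auto simp: algebra_simps)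
  also have "\<dots> = s2 * \<beta> $ i * (\<Sum>l<p. \<beta> $ l * v $ l) + d $ i * v $ i"
    using assms by (simp add: sum_distrib_left)
  finally show ?thesis .
qed

lemma fc_pv:
  assumes "v \<in> carrier_vec p"
  shows "port_var (factor_cov p s2 \<beta> d) v = s2 * (\<Sum>l<p. \<beta> $ l * v $ l)^2 + (\<Sum>l<p. d $ l * (v $ l)^2)"
proof -
  have "port_var (factor_cov p s2 \<beta> d) v = (\<Sum>i<p. v $ i * (s2 * \<beta> $ i * (\<Sum>l<p. \<beta> $ l * v $ l) + d $ i * v $ i))"
  proof -
    have "dim_row (factor_cov p s2 \<beta> d) = p" by (simp add: factor_cov_def)
    hence "port_var (factor_cov p s2 \<beta> d) v = (\<Sum>i<p. v $ i * (factor_cov p s2 \<beta> d *\<^sub>v v) $ i)"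
      unfolding port_var_def scalar_prod_def by (simp add: atLeast0LessThan)
    also have "\<dots> = (\<Sum>i<p. v $ i * (s2 * \<beta> $ i * (\<Sum>l<p. \<beta> $ l * v $ l) + d $ i * v $ i))"
      by (rule sum.cong[OF refl]) (subst fc_mv[OF assms], auto)
    finally show ?thesis .
  qed
  also have "\<dots> = (\<Sum>i<p. s2 * (\<Sum>l<p. \<beta> $ l * v $ l) * (\<beta> $ i * v $ i)) + (\<Sum>i<p. d $ i * (v $ i)^2)"
    by (subst sum.distrib[symmetric]) (rule sum.cong, auto simp: algebra_simps power2_eq_square)
  also have "\<dots> = s2 * (\<Sum>l<p. \<beta> $ l * v $ l)^2 + (\<Sum>l<p. d $ l * (v $ l)^2)"
    by (simp add: sum_distrib_left[symmetric] power2_eq_square)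
  finally show ?thesis .
qed

lemma quad_nonneg:
  fixes a M h :: real
  assumes "M \<ge> 0" "h > 0" "\<And>t. 0 < t \<Longrightarrow> t \<le> h \<Longrightarrow> a * t + M * t^2 \<ge> 0"
  shows "a \<ge> 0"
proof (rule ccontr)
  assume "\<not> a \<ge> 0"
  hence a: "a < 0" by simp
  define t where "t = min h (-a / (M + 1))"
  have "-a / (M+1) > 0" using a assms by (intro divide_pos_pos) auto
  hence t0: "t > 0" using assms by (simp add: t_def)
  have "t \<le> -a / (M+1)" by (simp add: t_def)
  hence "t * (M+1) \<le> -a" using assms by (simp add: field_simps)
  hence "M * t \<le> -a - t" by (simp add: algebra_simps)
  hence "M * t * t \<le> (-a - t) * t" using t0 by (intro mult_right_mono) auto
  hence "a * t + M * t^2 \<le> - t * t" by (simp add: power2_eq_square algebra_simps)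
  moreover have "- t * t < 0" using t0 by simp
  moreover have "t \<le> h" by (simp add: t_def)
  ultimately show False using assms(3)[OF t0] by linarith
qed

lemma downclosed:
  assumes "finite K" "\<And>i j. i \<in> K \<Longrightarrow> j \<le> i \<Longrightarrow> j \<in> K"
  shows "K = {..<card K}"
proof (cases "K = {}")
  case True thus ?thesis by simp
next
  case False
  define m where "m = Max K"
  have "K = {..m}"
    using assms False Max_ge Max_in unfolding m_def by blast
  thus ?thesis by (simp add: lessThan_Suc_atMost[symmetric])
qed


lemma lof_iff:
  "long_only_feasible p v \<longleftrightarrow> v \<in> carrier_vec p \<and> (\<Sum>l<p. v $ l) = 1 \<and> (\<forall>i<p. v $ i \<ge> 0)"
  unfolding long_only_feasible_def ones_vec_def scalar_prod_def
  by (auto simp: atLeast0LessThan)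

lemma kkt:
  assumes s2: "s2 > 0" and dpos: "\<And>i. i < p \<Longrightarrow> d $ i > 0"
    and mvp: "is_long_only_mvp p (factor_cov p s2 \<beta> d) w"
    and i: "i < p" "w $ i > 0" and j: "j < p" "j \<noteq> i"
  shows "s2 * \<beta> $ j * (\<Sum>l<p. \<beta> $ l * w $ l) + d $ j * w $ j
       \<ge> s2 * \<beta> $ i * (\<Sum>l<p. \<beta> $ l * w $ l) + d $ i * w $ i"
proof -
  define b where "b = (\<Sum>l<p. \<beta> $ l * w $ l)"
  have wf: "w \<in> carrier_vec p" "(\<Sum>l<p. w $ l) = 1" "\<And>l. l < p \<Longrightarrow> w $ l \<ge> 0"
    using mvp unfolding is_long_only_mvp_def lof_iff by auto
  define a where "a = 2 * ((s2 * \<beta> $ j * b + d $ j * w $ j) - (s2 * \<beta> $ i * b + d $ i * w $ i))"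
  define M where "M = s2 * (\<beta> $ j - \<beta> $ i)^2 + d $ i + d $ j"
  have "a \<ge> 0"
  proof (rule quad_nonneg[of M "w $ i"])
    show "M \<ge> 0" using s2 dpos[OF i(1)] dpos[OF j(1)] unfolding M_def
      by (intro add_nonneg_nonneg mult_nonneg_nonneg) auto
    show "w $ i > 0" by fact
    fix t :: real assume t: "0 < t" "t \<le> w $ i"
    define v where "v = vec p (\<lambda>l. w $ l + (if l = j then t else 0) - (if l = i then t else 0))"
    have vc: "v \<in> carrier_vec p" by (simp add: v_def)
    have vi: "\<And>l. l < p \<Longrightarrow> v $ l = w $ l + (if l = j then t else 0) - (if l = i then t else 0)"
      by (simp add: v_def)
    have "(\<Sum>l<p. v $ l) = (\<Sum>l<p. w $ l + (if l = j then t else 0) - (if l = i then t else 0))"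
      by (rule sum.cong) (auto simp: vi)
    also have "\<dots> = 1" using i j wf by (simp add: sum.distrib sum_subtractf)
    finally have vs: "(\<Sum>l<p. v $ l) = 1" .
    have vn: "\<forall>l<p. v $ l \<ge> 0" using wf t i j by (auto simp: vi)
    have "long_only_feasible p v" using vc vs vn by (simp add: lof_iff)
    hence le: "port_var (factor_cov p s2 \<beta> d) w \<le> port_var (factor_cov p s2 \<beta> d) v"
      using mvp unfolding is_long_only_mvp_def by blast
    have "(\<Sum>l<p. \<beta> $ l * v $ l) = (\<Sum>l<p. \<beta> $ l * w $ l + (if l = j then t * \<beta> $ j else 0) - (if l = i then t * \<beta> $ i else 0))"
      by (rule sum.cong) (auto simp: vi algebra_simps)
    also have "\<dots> = b + t * \<beta> $ j - t * \<beta> $ i" using i j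
      by (simp add: sum.distrib sum_subtractf b_def)
    finally have bv: "(\<Sum>l<p. \<beta> $ l * v $ l) = b + t * \<beta> $ j - t * \<beta> $ i" .
    have "(\<Sum>l<p. d $ l * (v $ l)^2) = (\<Sum>l<p. d $ l * (w $ l)^2 + (if l = j then d $ j * (2 * w $ j * t + t^2) else 0) + (if l = i then d $ i * (t^2 - 2 * w $ i * t) else 0))"
      by (rule sum.cong) (use j in \<open>auto simp: vi algebra_simps power2_eq_square\<close>)
    also have "\<dots> = (\<Sum>l<p. d $ l * (w $ l)^2) + d $ j * (2 * w $ j * t + t^2) + d $ i * (t^2 - 2 * w $ i * t)"
      using i j by (simp add: sum.distrib)
    finally have dv: "(\<Sum>l<p. d $ l * (v $ l)^2) = (\<Sum>l<p. d $ l * (w $ l)^2) + d $ j * (2 * w $ j * t + t^2) + d $ i * (t^2 - 2 * w $ i * t)" .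
    have "port_var (factor_cov p s2 \<beta> d) v - port_var (factor_cov p s2 \<beta> d) w = a * t + M * t^2"
      unfolding fc_pv[OF vc] fc_pv[OF wf(1)] bv dv b_def[symmetric] a_def M_def
      by (simp add: algebra_simps power2_eq_square)
    thus "a * t + M * t^2 \<ge> 0" using le by linarith
  qed
  thus ?thesis unfolding a_def b_def by simp
qed


theorem corollary2:
  fixes p :: nat and s2 :: real and \<beta> d w :: "real vec"
  assumes "p \<ge> 1" and "s2 > 0"
    and "\<beta> \<in> carrier_vec p" and "\<beta> \<noteq> 0\<^sub>v p"
    and "\<And>i j. i \<le> j \<Longrightarrow> j < p \<Longrightarrow> \<beta> $ i \<le> \<beta> $ j"
    and "d \<in> carrier_vec p" and "\<And>i. i < p \<Longrightarrow> d $ i > 0"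
    and "(\<Sum>i<p. \<beta> $ i / d $ i) \<ge> 0"
    and "is_long_only_mvp p (factor_cov p s2 \<beta> d) w"
  defines "K \<equiv> {i. i < p \<and> w $ i > 0}"
  defines "k \<equiv> card K"
  shows "(K = {..<p} \<and> long_short_mvp p (factor_cov p s2 \<beta> d) = w)
       \<or> (K \<noteq> {..<p} \<and> (\<Sum>j<k. \<beta> $ j / d $ j) > 0 \<and>
          (\<forall>i<p. w $ i > 0 \<longleftrightarrow>
             \<beta> $ i < (1 / s2 + (\<Sum>j<k. (\<beta> $ j)^2 / d $ j)) / (\<Sum>j<k. \<beta> $ j / d $ j)))"
proof -
  note s2 = assms(2) and mono = assms(5) and dpos = assms(7) and sumpos = assms(8)
    and mvp = assms(9)
  define S where "S = factor_cov p s2 \<beta> d"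
  define b where "b = (\<Sum>l<p. \<beta> $ l * w $ l)"
  define g where "g i = s2 * \<beta> $ i * b + d $ i * w $ i" for i
  define c where "c = s2 * b"
  have wf: "w \<in> carrier_vec p" "(\<Sum>l<p. w $ l) = 1" "\<And>l. l < p \<Longrightarrow> w $ l \<ge> 0"
    using mvp unfolding is_long_only_mvp_def lof_iff by auto
  have kkt': "g j \<ge> g i" if "i \<in> K" "j < p" for i j
  proof (cases "j = i")
    case True thus ?thesis by simp
  next
    case False thus ?thesis using kkt[OF s2 dpos mvp _ _ that(2) False] that(1)
      unfolding g_def b_def K_def by auto
  qed
  have Ksub: "K \<subseteq> {..<p}" and Kfin: "finite K" unfolding K_def by auto
  have w0: "w $ l = 0" if "l < p" "l \<notin> K" for l
    using that wf(3)[OF that(1)] unfolding K_def by force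
  have "K \<noteq> {}"
  proof
    assume "K = {}"
    hence "(\<Sum>l<p. w $ l) = 0" using w0 by simp
    thus False using wf(2) by simp
  qed
  then obtain i0 where i0: "i0 \<in> K" by blast
  define lam where "lam = g i0"
  have gK: "g i = lam" if "i \<in> K" for i
    using kkt'[OF that, of i0] kkt'[OF i0, of i] that i0 Ksub unfolding lam_def by force
  have gnK: "g j \<ge> lam" if "j < p" for j
    using kkt'[OF i0 that] unfolding lam_def .
  have wg: "w $ i * g i = w $ i * lam" if "i < p" for i
    using gK w0 that by (cases "i \<in> K") auto
  have "(\<Sum>i<p. w $ i * g i) = s2 * b^2 + (\<Sum>i<p. d $ i * (w $ i)^2)"
  proof -
    have "(\<Sum>i<p. w $ i * g i) = (\<Sum>i<p. (s2 * b) * (\<beta> $ i * w $ i)) + (\<Sum>i<p. d $ i * (w $ i)^2)"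
      unfolding g_def by (subst sum.distrib[symmetric]) (rule sum.cong, auto simp: algebra_simps power2_eq_square)
    thus ?thesis by (simp add: sum_distrib_left[symmetric] b_def power2_eq_square)
  qed
  moreover have "(\<Sum>i<p. w $ i * g i) = lam"
  proof -
    have "(\<Sum>i<p. w $ i * g i) = (\<Sum>i<p. w $ i * lam)" by (rule sum.cong) (auto simp: wg)
    also have "\<dots> = lam" using wf(2) by (simp add: sum_distrib_right[symmetric])
    finally show ?thesis .
  qed
  moreover have "(\<Sum>i<p. d $ i * (w $ i)^2) > 0"
  proof -
    have "0 < d $ i0 * (w $ i0)^2" using i0 dpos unfolding K_def by auto
    also have "\<dots> \<le> (\<Sum>i<p. d $ i * (w $ i)^2)"
      by (rule member_le_sum) (use i0 dpos Ksub in \<open>auto intro!: mult_nonneg_nonneg simp: less_imp_le\<close>)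
    finally show ?thesis .
  qed
  ultimately have lampos: "lam > 0" using s2
    by (smt (verit) mult_nonneg_nonneg zero_le_power2)
  show ?thesis
  proof (cases "K = {..<p}")
    case True
    have Sc: "S \<in> carrier_mat p p" by (simp add: S_def factor_cov_def)
    have Sw: "S *\<^sub>v w = lam \<cdot>\<^sub>v ones_vec p"
    proof (rule eq_vecI)
      show "dim_vec (S *\<^sub>v w) = dim_vec (lam \<cdot>\<^sub>v ones_vec p)" using Sc by (simp add: ones_vec_def)
      fix i assume "i < dim_vec (lam \<cdot>\<^sub>v ones_vec p)"
      hence i: "i < p" by (simp add: ones_vec_def)
      hence "i \<in> K" using True by auto
      thus "(S *\<^sub>v w) $ i = (lam \<cdot>\<^sub>v ones_vec p) $ i"
        using i gK unfolding S_def by (simp add: fc_mv[OF wf(1) i] ones_vec_def g_def b_def)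
    qed
    have "det S \<noteq> 0"
    proof
      assume "det S = 0"
      then obtain v where v: "v \<in> carrier_vec p" "v \<noteq> 0\<^sub>v p" "S *\<^sub>v v = 0\<^sub>v p"
        using det_0_iff_vec_prod_zero_field[OF Sc] by blast
      obtain l where l: "l < p" "v $ l \<noteq> 0"
        using v(1,2) by (metis carrier_vecD eq_vecI index_zero_vec(1,2))
      have "port_var S v = 0" using v unfolding port_var_def by simp
      moreover have "port_var S v = s2 * (\<Sum>l<p. \<beta> $ l * v $ l)^2 + (\<Sum>l<p. d $ l * (v $ l)^2)"
        unfolding S_def by (rule fc_pv[OF v(1)])
      moreover have "(\<Sum>l<p. d $ l * (v $ l)^2) > 0"
      proof -
        have "0 < d $ l * (v $ l)^2" using l dpos by auto
        also have "\<dots> \<le> (\<Sum>i<p. d $ i * (v $ i)^2)"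
          by (rule member_le_sum) (use l dpos in \<open>auto intro!: mult_nonneg_nonneg simp: less_imp_le\<close>)
        finally show ?thesis .
      qed
      ultimately show False using s2 by (smt (verit) mult_nonneg_nonneg zero_le_power2)
    qed
    hence "S \<in> Units (ring_mat TYPE(real) p ())" by (rule det_non_zero_imp_unit[OF Sc])
    then obtain B where B: "mat_inverse S = Some B"
      using mat_inverse(1)[OF Sc, of "()"] by (cases "mat_inverse S") auto
    hence BS: "B * S = 1\<^sub>m p" and Bc: "B \<in> carrier_mat p p" using mat_inverse(2)[OF Sc] by auto
    have onec: "ones_vec p \<in> carrier_vec p" by (simp add: ones_vec_def)
    have "w = B *\<^sub>v (S *\<^sub>v w)" using BS Bc Sc wf(1)
      by (metis assoc_mult_mat_vec one_mult_mat_vec)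
    also have "\<dots> = lam \<cdot>\<^sub>v (B *\<^sub>v ones_vec p)" using Sw Bc onec
      by (simp add: mult_mat_vec)
    finally have wB: "w = lam \<cdot>\<^sub>v (B *\<^sub>v ones_vec p)" .
    have Bi: "(B *\<^sub>v ones_vec p) $ i = w $ i / lam" if "i < p" for i
      using arg_cong[OF wB, of "\<lambda>x. x $ i"] that Bc lampos by (simp add: field_simps)
    have "ones_vec p \<bullet> (B *\<^sub>v ones_vec p) = (\<Sum>i<p. w $ i / lam)"
      using Bc Bi unfolding scalar_prod_def ones_vec_def by (simp add: atLeast0LessThan)
    also have "\<dots> = 1 / lam" using wf(2) by (simp add: sum_divide_distrib[symmetric])
    finally have one: "ones_vec p \<bullet> (B *\<^sub>v ones_vec p) = 1 / lam" .
    have "long_short_mvp p S = w"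
    proof (rule eq_vecI)
      show "dim_vec (long_short_mvp p S) = dim_vec w" using Bc wf(1)
        unfolding long_short_mvp_def Let_def B by simp
      fix i assume "i < dim_vec w"
      hence i: "i < p" using wf(1) by simp
      show "long_short_mvp p S $ i = w $ i"
        unfolding long_short_mvp_def Let_def B option.sel one using i Bc Bi lampos by simp
    qed
    thus ?thesis using True unfolding S_def by simp
  next
    case False
    then obtain j0 where j0: "j0 < p" "j0 \<notin> K" using Ksub by blast
    define Bs where "Bs = (\<Sum>i\<in>K. \<beta> $ i / d $ i)"
    define Cs where "Cs = (\<Sum>i\<in>K. (\<beta> $ i)^2 / d $ i)"
    have gnK': "c * \<beta> $ j \<ge> lam" if "j < p" "j \<notin> K" for j
      using gnK[OF that(1)] w0[OF that] unfolding g_def c_def by (simp add: algebra_simps)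
    have wK: "w $ i = (lam - c * \<beta> $ i) / d $ i" if "i \<in> K" for i
      using gK[OF that] dpos[of i] that Ksub unfolding g_def c_def
      by (auto simp: field_simps)
    have "b = (\<Sum>i\<in>K. \<beta> $ i * w $ i)"
      unfolding b_def by (rule sum.mono_neutral_right) (use Ksub w0 in auto)
    also have "\<dots> = (\<Sum>i\<in>K. lam * (\<beta> $ i / d $ i) - c * ((\<beta> $ i)^2 / d $ i))"
      by (rule sum.cong) (auto simp: wK power2_eq_square diff_divide_distrib algebra_simps)
    also have "\<dots> = lam * Bs - c * Cs"
      unfolding Bs_def Cs_def by (simp add: sum_subtractf sum_distrib_left)
    finally have beq: "b = lam * Bs - c * Cs" .
    have Cnn: "Cs \<ge> 0" unfolding Cs_def using Ksub dpos
      by (intro sum_nonneg) (auto intro!: divide_nonneg_pos)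
    have ceq: "c * (1 / s2 + Cs) = lam * Bs"
    proof -
      have "c / s2 = b" using s2 unfolding c_def by simp
      hence "c * (1 / s2 + Cs) = b + c * Cs" by (simp add: algebra_simps)
      thus ?thesis using beq by simp
    qed
    have cpos: "c > 0"
    proof (rule ccontr)
      assume "\<not> c > 0"
      moreover have "c \<noteq> 0" using gnK'[OF j0] lampos by auto
      ultimately have cneg: "c < 0" by simp
      have "1 / s2 + Cs > 0" using s2 Cnn by (simp add: add_pos_nonneg)
      hence "lam * Bs < 0" using ceq cneg by (metis mult_neg_pos)
      hence Bneg: "Bs < 0" using lampos by (simp add: mult_less_0_iff)
      have "(\<Sum>i<p. \<beta> $ i / d $ i) = Bs + (\<Sum>i\<in>{..<p} - K. \<beta> $ i / d $ i)"
        unfolding Bs_def using Ksub by (metis finite_lessThan sum.subset_diff add.commute)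
      moreover have "(\<Sum>i\<in>{..<p} - K. \<beta> $ i / d $ i) \<le> 0"
      proof (rule sum_nonpos)
        fix j assume "j \<in> {..<p} - K"
        hence j: "j < p" "j \<notin> K" by auto
        have "c * \<beta> $ j > 0" using gnK'[OF j] lampos by linarith
        hence "\<beta> $ j < 0" using cneg by (simp add: zero_less_mult_iff)
        thus "\<beta> $ j / d $ j \<le> 0" using dpos[OF j(1)] by (simp add: divide_nonpos_pos)
      qed
      ultimately show False using sumpos Bneg by linarith
    qed
    have Bpos: "Bs > 0"
    proof -
      have "1 / s2 + Cs > 0" using s2 Cnn by (simp add: add_pos_nonneg)
      hence "lam * Bs > 0" using ceq cpos by (metis mult_pos_pos)
      thus ?thesis using lampos by (simp add: zero_less_mult_iff)
    qed
    have thr: "lam / c = (1 / s2 + Cs) / Bs"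
      using ceq cpos Bpos by (subst frac_eq_eq) (auto simp: algebra_simps)
    have iff: "w $ i > 0 \<longleftrightarrow> \<beta> $ i < lam / c" if i: "i < p" for i
    proof (cases "i \<in> K")
      case True
      hence "w $ i > 0" unfolding K_def by simp
      moreover have "c * \<beta> $ i < lam"
      proof -
        have "d $ i * w $ i > 0" using \<open>w $ i > 0\<close> dpos[OF i] by simp
        moreover have "c * \<beta> $ i = lam - d $ i * w $ i" using gK[OF True]
          unfolding g_def c_def by (simp add: algebra_simps)
        ultimately show ?thesis by linarith
      qed
      ultimately show ?thesis using cpos by (simp add: pos_less_divide_eq mult.commute)
    next
      case False
      hence "\<not> w $ i > 0" using i unfolding K_def by simp
      moreover have "c * \<beta> $ i \<ge> lam" using gnK'[OF i False] .
      ultimately show ?thesis using cpos by (simp add: pos_divide_le_eq not_less mult.commute)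
    qed
    have "K = {..<card K}"
    proof (rule downclosed[OF Kfin])
      fix i j assume ij: "i \<in> K" "j \<le> i"
      hence ip: "i < p" and jp: "j < p" using Ksub by auto
      have "w $ i > 0" using ij unfolding K_def by simp
      hence "\<beta> $ i < lam / c" using iff[OF ip] by simp
      moreover have "\<beta> $ j \<le> \<beta> $ i" using mono[OF ij(2) ip] .
      ultimately have "\<beta> $ j < lam / c" by simp
      thus "j \<in> K" using iff[OF jp] jp unfolding K_def by simp
    qed
    hence Kk: "K = {..<k}" unfolding k_def .
    have "(\<Sum>j<k. \<beta> $ j / d $ j) = Bs" unfolding Bs_def Kk ..
    moreover have "(\<Sum>j<k. (\<beta> $ j)^2 / d $ j) = Cs" unfolding Cs_def Kk ..
    ultimately show ?thesis using False Bpos iff thr by simp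
  qed
qed

end
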